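(* Every hyperpath is $\mathbb{Z}_2\times\mathbb{Z}_2$-cordial.
   Context: A path hypergraph with edges $e_1,\dots,e_m$ ($m\ge 1$, in this order) is a finite hypergraph $H=(V,E)$ with $E=\{e_1,\dots,e_m\}$, $V=e_1\cup\cdots\cup e_m$, $|e_i\cap e_{i+1}|=1$ for $1\le i<m$, and $e_i\cap e_j=\emptyset$ whenever $|i-j|\ge 2$. A hyperpath is a path hypergraph in which every edge has at least 3 vertices. Let $A=\mathbb{Z}_2\times\mathbb{Z}_2$. For a labeling $c:V\to A$, write $v_c(a)=|c^{-1}(a)|$; $c$ is $A$-friendly if $|v_c(a)-v_c(b)|\le 1$ for all $a,b\in A$. It induces $c^*:E\to A$, $c^*(e)=\sum_{v\in e}c(v)$; write $e_{c^*}(a)=|(c^* )^{-1}(a)|$. $H$ is $A$-cordial if it admits an $A$-friendly labeling $c$ with $|e_{c^*}(a)-e_{c^*}(b)|\le 1$ for all $a,b\in A$. *)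

theory Defs
  imports Main "HOL-Library.Z2" "HOL-Library.Product_Plus"
begin

type_synonym klein = "bit \<times> bit"

text \<open>A path hypergraph given by its edges e_1,...,e_m in order (list es, m = length es).
  Indices are 0-based. The hypergraph is finite: every edge is a finite set.\<close>
definition path_hypergraph :: "'v set list \<Rightarrow> bool" where
  "path_hypergraph es \<longleftrightarrow>
     length es \<ge> 1 \<and>
     (\<forall>i < length es. finite (es ! i)) \<and>
     (\<forall>i. i + 1 < length es \<longrightarrow> card (es ! i \<inter> es ! (i + 1)) = 1) \<and>
     (\<forall>i < length es. \<forall>j < length es. i + 2 \<le> j \<longrightarrow> es ! i \<inter> es ! j = {})"

definition hyperpath :: "'v set list \<Rightarrow> bool" where
  "hyperpath es \<longleftrightarrow> path_hypergraph es \<and> (\<forall>i < length es. card (es ! i) \<ge> 3)"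

definition hvertices :: "'v set list \<Rightarrow> 'v set" where
  "hvertices es = \<Union> (set es)"

definition vcount :: "'v set list \<Rightarrow> ('v \<Rightarrow> klein) \<Rightarrow> klein \<Rightarrow> nat" where
  "vcount es c a = card {v \<in> hvertices es. c v = a}"

definition induced :: "('v \<Rightarrow> klein) \<Rightarrow> 'v set \<Rightarrow> klein" where
  "induced c e = (\<Sum>v\<in>e. c v)"

definition ecount :: "'v set list \<Rightarrow> ('v \<Rightarrow> klein) \<Rightarrow> klein \<Rightarrow> nat" where
  "ecount es c a = card {e \<in> set es. induced c e = a}"

definition A_friendly :: "'v set list \<Rightarrow> ('v \<Rightarrow> klein) \<Rightarrow> bool" where
  "A_friendly es c \<longleftrightarrow>
     (\<forall>a b. \<bar>int (vcount es c a) - int (vcount es c b)\<bar> \<le> 1)"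

definition A_cordial :: "'v set list \<Rightarrow> bool" where
  "A_cordial es \<longleftrightarrow>
     (\<exists>c. A_friendly es c \<and> (\<forall>a b. \<bar>int (ecount es c a) - int (ecount es c b)\<bar> \<le> 1))"

end

theory Submission
  imports Defs
begin

definition kl :: "klein list" where "kl = [(0,0),(1,0),(0,1),(1,1)]"

definition ind :: "klein list \<Rightarrow> klein \<Rightarrow> nat" where
  "ind L a = (if a \<in> set L then 1 else 0)"

definition mk :: "nat \<Rightarrow> nat \<Rightarrow> nat \<Rightarrow> nat \<Rightarrow> klein \<Rightarrow> nat" where
  "mk m0 m1 m2 m3 a = (if a = (0,0) then m0 else if a = (1,0) then m1 else if a = (0,1) then m2 else m3)"

definition Msum :: "(klein \<Rightarrow> nat) \<Rightarrow> nat" where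
  "Msum M = M (0,0) + M (1,0) + M (0,1) + M (1,1)"

definition zs :: "(klein \<Rightarrow> nat) \<Rightarrow> klein" where
  "zs M = (if odd (M (1,0)) then (1,0) else 0) + (if odd (M (0,1)) then (0,1) else 0)
        + (if odd (M (1,1)) then (1,1) else 0)"

fun tchk :: "nat \<Rightarrow> klein list \<times> klein list \<times> klein \<Rightarrow> klein list \<times> klein list \<times> klein
   \<Rightarrow> nat \<times> nat \<times> nat \<times> nat \<times> nat \<times> nat \<Rightarrow> bool" where
  "tchk k (dv',de',y) (dv,de,r) (m0,m1,m2,m3,t,t') =
    (Msum (mk m0 m1 m2 m3) = k \<and> list_all (\<lambda>a. mk m0 m1 m2 m3 a + ind dv a = ind dv' a + t) kl
     \<and> 0 < mk m0 m1 m2 m3 r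
     \<and> list_all (\<lambda>a. ind de a + (if a = y + zs (mk m0 m1 m2 m3) then 1 else 0) = ind de' a + t') kl)"

fun bchk :: "nat \<Rightarrow> klein list \<times> klein list \<times> klein
   \<Rightarrow> nat \<times> nat \<times> nat \<times> nat \<times> nat \<times> nat \<Rightarrow> bool" where
  "bchk n (dv,de,r) (m0,m1,m2,m3,t,t') =
    (Msum (mk m0 m1 m2 m3) = n \<and> list_all (\<lambda>a. mk m0 m1 m2 m3 a + ind dv a = t) kl
     \<and> 0 < mk m0 m1 m2 m3 r
     \<and> list_all (\<lambda>a. ind de a + (if a = zs (mk m0 m1 m2 m3) then 1 else 0) = t') kl)"

definition fam :: "((klein list \<times> klein list \<times> klein) list) list" where
  "fam = [[([(0,0),(1,0),(0,1)],[],(1,1)), ([(0,0),(0,1),(1,1)],[],(1,0)), ([(1,0),(0,1),(1,1)],[],(0,0))],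
   [([(0,0)],[(1,0)],(0,1)), ([(1,0)],[(1,1)],(0,0)), ([(0,1)],[(0,1)],(1,0)), ([(1,1)],[(1,0)],(0,1))],
   [([(0,0),(1,0)],[(0,0)],(1,1)), ([(0,0),(1,0)],[(1,1)],(0,1)), ([(1,0),(0,1)],[(0,0)],(0,1)), ([(1,0),(1,1)],[(1,0)],(0,0)), ([(0,1),(1,1)],[(0,0)],(1,0))],
   [([(0,1)],[(1,0),(0,1)],(0,0)), ([(0,1)],[(1,0),(0,1)],(1,0)), ([(0,1)],[(1,0),(0,1)],(1,1)), ([(1,1)],[(1,0),(1,1)],(0,1)), ([(1,1)],[(0,1),(1,1)],(0,0)), ([(1,1)],[(0,1),(1,1)],(1,0))],
   [([(0,0),(1,0),(1,1)],[(0,1),(1,1)],(0,1)), ([(0,0),(0,1),(1,1)],[(0,0),(1,1)],(1,0)), ([(0,0),(0,1),(1,1)],[(1,0),(0,1)],(1,0)), ([(0,0),(0,1),(1,1)],[(1,0),(1,1)],(0,1)), ([(1,0),(0,1),(1,1)],[(0,0),(0,1)],(0,0)), ([(1,0),(0,1),(1,1)],[(0,0),(0,1)],(1,1)), ([(1,0),(0,1),(1,1)],[(1,0),(1,1)],(0,0))],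
   [([(0,0),(1,0)],[],(0,1)), ([(0,0),(1,0)],[],(1,1)), ([(0,0),(0,1)],[],(1,1)), ([(0,0),(1,1)],[],(1,0)), ([(1,0),(0,1)],[],(0,0)), ([(0,1),(1,1)],[],(0,0))],
   [([(0,0),(0,1)],[(1,0),(0,1),(1,1)],(1,0)), ([(0,0),(1,1)],[(0,0),(1,0),(0,1)],(0,1)), ([(0,0),(1,1)],[(1,0),(0,1),(1,1)],(1,0)), ([(0,0),(1,1)],[(1,0),(0,1),(1,1)],(0,1)), ([(1,0),(0,1)],[(0,0),(1,0),(1,1)],(1,1)), ([(1,0),(1,1)],[(1,0),(0,1),(1,1)],(0,1)), ([(0,1),(1,1)],[(0,0),(1,0),(0,1)],(1,0))],
   [([(0,0),(1,0)],[(0,1)],(0,1)), ([(0,0),(1,0)],[(1,1)],(0,1)), ([(1,0),(1,1)],[(1,0)],(0,0)), ([(0,1),(1,1)],[(1,0)],(0,0)), ([(0,1),(1,1)],[(0,1)],(1,0))],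
   [([],[],(0,0)), ([],[],(1,0)), ([],[],(0,1)), ([],[],(1,1))],
   [([(0,0),(1,0)],[(1,0),(0,1)],(1,1)), ([(0,0),(0,1)],[(0,0),(1,0)],(1,1)), ([(0,0),(1,1)],[(0,0),(0,1)],(0,1)), ([(0,0),(1,1)],[(1,0),(1,1)],(0,1)), ([(1,0),(0,1)],[(0,0),(1,0)],(0,0)), ([(1,0),(0,1)],[(0,0),(1,0)],(1,1)), ([(1,0),(1,1)],[(0,0),(1,0)],(0,1)), ([(0,1),(1,1)],[(0,0),(0,1)],(1,0)), ([(0,1),(1,1)],[(0,0),(1,1)],(0,0))],
   [([(0,0),(1,0),(0,1)],[(0,0),(1,0),(0,1)],(1,0)), ([(0,0),(1,0),(0,1)],[(0,0),(1,0),(0,1)],(1,1)), ([(0,0),(1,0),(1,1)],[(0,0),(1,0),(1,1)],(0,1)), ([(0,0),(0,1),(1,1)],[(0,0),(0,1),(1,1)],(0,1)), ([(1,0),(0,1),(1,1)],[(1,0),(0,1),(1,1)],(1,0)), ([(1,0),(0,1),(1,1)],[(1,0),(0,1),(1,1)],(0,1)), ([(1,0),(0,1),(1,1)],[(1,0),(0,1),(1,1)],(1,1))],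
   [([(0,0),(1,0)],[(0,0),(0,1),(1,1)],(0,1)), ([(0,0),(0,1)],[(0,0),(1,0),(1,1)],(1,0)), ([(0,0),(0,1)],[(0,0),(1,0),(1,1)],(0,1)), ([(0,0),(0,1)],[(0,0),(1,0),(1,1)],(1,1)), ([(0,0),(1,1)],[(0,0),(1,0),(0,1)],(1,0)), ([(0,0),(1,1)],[(0,0),(1,0),(0,1)],(0,1)), ([(0,0),(1,1)],[(0,0),(1,0),(0,1)],(1,1)), ([(1,0),(0,1)],[(0,0),(1,0),(0,1)],(1,1)), ([(1,0),(1,1)],[(0,0),(1,0),(1,1)],(0,1)), ([(0,1),(1,1)],[(0,0),(0,1),(1,1)],(1,0)), ([(0,1),(1,1)],[(0,0),(0,1),(1,1)],(1,1))],
   [([(0,0)],[(0,0),(1,1)],(0,1)), ([(0,1)],[(0,0),(1,0)],(1,1)), ([(0,1)],[(1,0),(0,1)],(0,0)), ([(0,1)],[(1,0),(0,1)],(1,1)), ([(1,1)],[(1,0),(1,1)],(0,1)), ([(1,1)],[(0,1),(1,1)],(0,0)), ([(1,1)],[(0,1),(1,1)],(1,0))],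
   [([(0,0)],[(1,0)],(0,1)), ([(1,0)],[(0,0)],(1,1)), ([(1,1)],[(1,0)],(0,1)), ([(1,1)],[(0,1)],(0,0))],
   [([(0,0),(0,1)],[(1,0),(0,1),(1,1)],(1,0)), ([(0,0),(1,1)],[(0,0),(1,0),(1,1)],(1,1)), ([(0,0),(1,1)],[(0,0),(0,1),(1,1)],(1,1)), ([(1,0),(0,1)],[(1,0),(0,1),(1,1)],(1,0)), ([(1,0),(1,1)],[(0,0),(1,0),(0,1)],(0,1)), ([(1,0),(1,1)],[(0,0),(0,1),(1,1)],(1,0)), ([(0,1),(1,1)],[(0,0),(1,0),(0,1)],(1,1)), ([(0,1),(1,1)],[(0,0),(1,0),(1,1)],(0,1))],
   [([],[(1,0),(0,1)],(0,0)), ([],[(1,0),(0,1)],(0,1)), ([],[(1,0),(0,1)],(1,1)), ([],[(1,0),(1,1)],(0,0)), ([],[(1,0),(1,1)],(1,0)), ([],[(0,1),(1,1)],(1,1))],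
   [([(0,0)],[(1,0),(0,1),(1,1)],(1,0)), ([(0,0)],[(1,0),(0,1),(1,1)],(0,1)), ([(0,0)],[(1,0),(0,1),(1,1)],(1,1)), ([(1,0)],[(0,0),(0,1),(1,1)],(0,1)), ([(1,0)],[(0,0),(0,1),(1,1)],(1,1)), ([(0,1)],[(0,0),(1,0),(1,1)],(1,1)), ([(1,1)],[(0,0),(1,0),(0,1)],(1,0)), ([(1,1)],[(0,0),(1,0),(0,1)],(0,1))],
   [([],[(1,0),(0,1),(1,1)],(0,0)), ([],[(1,0),(0,1),(1,1)],(1,0)), ([],[(1,0),(0,1),(1,1)],(0,1)), ([],[(1,0),(0,1),(1,1)],(1,1))],
   [([],[(1,0)],(1,1)), ([],[(0,1)],(1,1)), ([],[(1,1)],(0,0)), ([],[(1,1)],(1,1))],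
   [([(0,0),(1,0)],[(0,1),(1,1)],(1,1)), ([(0,0),(1,1)],[(1,0),(0,1)],(1,0)), ([(1,0),(0,1)],[(1,0),(0,1)],(0,0)), ([(1,0),(0,1)],[(1,0),(1,1)],(0,0)), ([(1,0),(0,1)],[(0,1),(1,1)],(0,0)), ([(1,0),(1,1)],[(1,0),(0,1)],(0,1)), ([(0,1),(1,1)],[(1,0),(0,1)],(0,0)), ([(0,1),(1,1)],[(1,0),(1,1)],(0,0))],
   [([(0,0)],[],(0,1)), ([(1,0)],[],(0,1)), ([(1,0)],[],(1,1)), ([(0,1)],[],(1,0)), ([(0,1)],[],(1,1)), ([(1,1)],[],(1,0)), ([(1,1)],[],(0,1))],
   [([],[(0,0),(1,0),(0,1)],(0,0)), ([],[(0,0),(1,0),(0,1)],(1,0)), ([],[(0,0),(1,0),(0,1)],(0,1)), ([],[(0,0),(1,0),(1,1)],(0,0)), ([],[(0,0),(1,0),(1,1)],(1,0)), ([],[(0,0),(1,0),(1,1)],(1,1)), ([],[(0,0),(0,1),(1,1)],(0,0)), ([],[(0,0),(0,1),(1,1)],(0,1)), ([],[(0,0),(0,1),(1,1)],(1,1))],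
   [([(0,0),(1,0),(0,1)],[(1,0)],(0,1)), ([(0,0),(1,0),(0,1)],[(0,1)],(1,1)), ([(0,0),(0,1),(1,1)],[(1,0)],(0,1)), ([(0,0),(0,1),(1,1)],[(0,1)],(1,1)), ([(1,0),(0,1),(1,1)],[(1,0)],(0,1)), ([(1,0),(0,1),(1,1)],[(0,1)],(1,1))],
   [([(0,0),(1,0),(0,1)],[(1,0),(0,1)],(1,0)), ([(0,0),(1,0),(0,1)],[(1,0),(1,1)],(0,1)), ([(0,0),(1,0),(0,1)],[(0,1),(1,1)],(0,0)), ([(0,0),(1,0),(1,1)],[(1,0),(1,1)],(1,0)), ([(0,0),(1,0),(1,1)],[(0,1),(1,1)],(0,0)), ([(1,0),(0,1),(1,1)],[(1,0),(0,1)],(1,0)), ([(1,0),(0,1),(1,1)],[(1,0),(1,1)],(0,1)), ([(1,0),(0,1),(1,1)],[(0,1),(1,1)],(1,0))],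
   [([(0,0),(1,0),(0,1)],[(1,0)],(0,1)), ([(0,0),(1,0),(0,1)],[(0,1)],(1,1)), ([(0,0),(1,0),(1,1)],[(0,0)],(0,1)), ([(0,0),(0,1),(1,1)],[(0,0)],(1,1)), ([(1,0),(0,1),(1,1)],[(1,0)],(0,1)), ([(1,0),(0,1),(1,1)],[(0,1)],(1,1))],
   [([(0,0),(1,0),(0,1)],[(0,0),(1,0)],(1,0)), ([(0,0),(1,0),(0,1)],[(1,0),(1,1)],(0,0)), ([(0,0),(1,0),(1,1)],[(0,0),(1,0)],(0,1)), ([(0,0),(1,0),(1,1)],[(0,0),(1,1)],(1,1)), ([(0,0),(1,0),(1,1)],[(0,1),(1,1)],(0,0)), ([(0,0),(0,1),(1,1)],[(1,0),(1,1)],(1,0)), ([(1,0),(0,1),(1,1)],[(0,0),(0,1)],(0,0)), ([(1,0),(0,1),(1,1)],[(1,0),(0,1)],(1,1)), ([(1,0),(0,1),(1,1)],[(0,1),(1,1)],(0,0))],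
   [([(0,0)],[(0,0),(1,0),(1,1)],(1,1)), ([(0,0)],[(0,0),(0,1),(1,1)],(0,1)), ([(0,0)],[(0,0),(0,1),(1,1)],(1,1)), ([(1,0)],[(0,0),(1,0),(1,1)],(1,0)), ([(0,1)],[(0,0),(1,0),(0,1)],(0,1)), ([(1,1)],[(0,0),(0,1),(1,1)],(1,1)), ([(1,1)],[(1,0),(0,1),(1,1)],(0,0)), ([(1,1)],[(1,0),(0,1),(1,1)],(1,0)), ([(1,1)],[(1,0),(0,1),(1,1)],(0,1))],
   [([(0,0),(1,0),(0,1)],[(0,0),(1,0),(1,1)],(0,1)), ([(0,0),(1,0),(0,1)],[(0,0),(0,1),(1,1)],(0,0)), ([(0,0),(1,0),(0,1)],[(0,0),(0,1),(1,1)],(1,0)), ([(0,0),(1,0),(1,1)],[(0,0),(1,0),(0,1)],(0,1)), ([(0,0),(1,0),(1,1)],[(0,0),(0,1),(1,1)],(0,1)), ([(0,0),(1,0),(1,1)],[(1,0),(0,1),(1,1)],(0,0)), ([(0,0),(0,1),(1,1)],[(0,0),(1,0),(0,1)],(0,0)), ([(0,0),(0,1),(1,1)],[(0,0),(1,0),(0,1)],(1,1)), ([(0,0),(0,1),(1,1)],[(0,0),(1,0),(1,1)],(0,1)), ([(1,0),(0,1),(1,1)],[(0,0),(1,0),(0,1)],(0,0))]]"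

definition cert :: "((nat \<times> (nat \<times> nat \<times> nat \<times> nat \<times> nat \<times> nat \<times> nat) list) list) list" where
  "cert = [[(16,[(0,0,1,1,0,0,1),(0,0,1,1,0,0,1),(1,0,0,1,1,0,1),(0,1,0,1,0,0,1),(2,0,0,1,1,0,1),(1,1,0,0,1,0,1),(2,0,1,1,0,0,1),(1,1,0,1,0,0,1)]), (17,[(0,1,1,1,0,0,1),(0,1,1,1,0,0,1),(0,1,1,1,0,0,1),(1,1,0,1,1,0,1)]), (10,[(0,1,1,1,1,1,1),(0,1,1,1,1,1,1),(0,1,1,2,0,1,1),(0,1,2,1,0,1,1),(0,2,1,1,0,1,1),(0,2,1,1,0,1,1),(1,2,0,1,1,1,1)]), (11,[(0,1,1,2,1,1,1),(0,1,2,1,1,1,1),(0,1,2,1,1,1,1),(0,1,2,1,1,1,1),(0,1,2,2,0,1,1),(0,1,2,2,0,1,1),(1,1,1,2,1,1,1),(0,2,1,1,1,1,1),(0,2,1,2,0,1,1),(0,2,2,1,0,1,1),(1,2,1,1,1,1,1)])],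
   [(0,[(0,1,0,0,1,1,0),(2,0,1,1,0,1,0),(3,1,0,0,1,1,0)]), (5,[(2,0,0,2,1,1,0),(2,0,0,2,1,1,0),(1,0,2,0,1,1,0),(0,1,1,1,0,1,0),(0,2,0,0,1,1,0),(2,1,1,1,0,1,0)]), (20,[(3,0,1,1,2,1,0),(2,1,0,2,1,1,0),(2,1,0,2,1,1,0),(1,1,2,0,1,1,0),(1,1,2,0,1,1,0),(0,2,1,1,0,1,0),(0,2,1,1,0,1,0)]), (8,[(3,1,1,1,2,1,0),(3,1,1,1,2,1,0),(3,1,1,1,2,1,0),(3,1,1,1,2,1,0)])],
   [(8,[(1,1,1,0,0,0,0),(1,1,1,0,0,0,0),(4,0,0,1,1,0,0),(4,0,0,1,1,0,0)]), (0,[(3,0,1,0,2,1,0),(2,0,2,1,0,1,0),(1,2,1,0,0,1,0)]), (5,[(2,0,1,2,1,1,0),(2,0,1,2,1,1,0),(0,1,2,0,1,1,0),(3,0,2,1,1,1,0),(3,1,1,0,2,1,0),(2,1,2,1,0,1,0)]), (20,[(1,1,2,1,1,1,0),(2,1,1,2,1,1,0),(2,1,1,2,1,1,0),(0,2,2,0,1,1,0),(0,2,2,0,1,1,0),(3,1,2,1,1,1,0),(3,1,2,1,1,1,0)])],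
   [(22,[(2,0,0,1,1,1,0),(0,0,0,1,1,1,0),(1,0,1,1,0,1,0),(5,0,1,0,1,1,0),(0,1,0,1,0,1,0),(4,1,0,0,1,1,0)]), (7,[(5,0,0,1,2,1,0),(4,0,0,1,2,1,0),(3,1,0,1,1,1,0),(1,1,1,1,0,1,0),(5,1,1,0,1,1,0)]), (1,[(0,0,1,2,1,1,0),(4,1,0,1,2,1,0),(1,1,1,1,1,1,0),(2,1,1,2,0,1,0)]), (18,[(0,1,1,2,1,1,0),(2,1,1,2,1,1,0),(3,1,1,1,2,1,0),(3,1,1,1,2,1,0)])],
   [(13,[(3,0,0,1,1,0,0),(5,0,0,1,1,0,0),(6,0,1,1,0,0,0),(0,1,1,0,0,0,0)]), (18,[(3,1,0,1,1,0,0),(4,0,1,1,1,0,0),(1,1,0,1,1,0,0),(1,1,0,1,1,0,0)]), (24,[(6,0,1,1,2,1,0),(0,1,1,0,2,1,0),(4,0,1,2,1,1,0),(5,0,2,1,1,1,0),(3,2,0,1,1,1,0),(4,1,1,1,1,1,0)]), (2,[(5,0,1,2,2,1,0),(6,0,1,2,2,1,0),(1,2,0,1,2,1,0),(2,2,0,2,1,1,0),(5,1,2,1,1,1,0)])],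
   [(21,[(0,1,1,0,0,0,1),(0,1,1,0,0,0,1),(4,0,1,1,0,0,1),(1,1,1,0,0,0,1),(1,1,1,0,0,0,1),(3,1,0,0,1,0,1),(2,1,0,1,0,0,1),(2,1,0,1,0,0,1),(5,0,0,1,1,0,1)]), (27,[(2,1,0,1,1,1,1),(1,1,1,0,1,1,1),(1,1,1,0,1,1,1),(2,1,0,2,0,1,1),(0,1,1,1,0,1,1),(1,1,1,1,0,1,1),(1,1,2,0,0,1,1),(3,1,1,0,1,1,1),(4,0,2,1,0,1,1),(0,2,1,0,0,1,1)]), (14,[(1,1,2,0,1,1,1),(5,0,1,2,1,1,1),(3,1,1,1,1,1,1),(0,2,1,0,1,1,1),(2,2,0,2,0,1,1),(0,2,1,1,0,1,1),(3,2,1,0,1,1,1),(4,1,2,1,0,1,1)]), (26,[(1,1,2,1,1,1,1),(2,1,1,2,1,1,1),(2,1,1,2,1,1,1),(0,2,1,1,1,1,1),(2,2,1,1,1,1,1),(3,2,1,1,1,1,1),(0,2,2,1,0,1,1),(0,2,2,1,0,1,1),(0,2,2,1,0,1,1)])],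
   [(15,[(0,1,0,1,0,0,0),(0,1,0,1,0,0,0),(6,0,0,1,1,0,0),(2,1,0,0,1,0,0),(4,0,1,1,0,0,0),(3,1,0,0,1,0,0)]), (4,[(0,1,0,2,0,1,0),(4,0,2,1,0,1,0),(1,1,1,0,1,1,0),(0,1,1,1,0,1,0),(1,2,0,0,1,1,0),(1,2,0,0,1,1,0),(2,2,0,0,1,1,0)]), (19,[(5,0,1,1,2,1,0),(5,0,2,1,1,1,0),(5,1,1,0,2,1,0),(3,2,0,0,2,1,0),(2,2,0,0,2,1,0),(3,2,0,1,1,1,0),(1,2,1,0,1,1,0),(0,2,1,1,0,1,0)]), (3,[(3,2,1,0,2,1,0),(3,2,1,0,2,1,0),(3,2,1,0,2,1,0),(3,2,1,1,1,1,0),(2,2,1,1,1,1,0),(2,2,1,1,1,1,0)])],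
   [(8,[(1,1,1,0,0,0,0),(1,1,1,0,0,0,0),(3,0,0,1,1,0,0),(3,0,0,1,1,0,0)]), (0,[(2,0,1,0,2,1,0),(0,1,2,0,0,1,0),(1,2,1,0,0,1,0)]), (5,[(0,1,1,1,1,1,0),(0,1,1,1,1,1,0),(4,0,1,1,2,1,0),(2,0,2,1,1,1,0),(2,1,1,0,2,1,0),(0,2,2,0,0,1,0)]), (20,[(1,1,2,1,1,1,0),(0,2,1,1,1,1,0),(0,2,1,1,1,1,0),(4,1,1,1,2,1,0),(4,1,1,1,2,1,0),(2,1,2,1,1,1,0),(2,1,2,1,1,1,0)])],
   [(6,[(2,0,1,0,1,1,1),(0,0,1,1,0,1,1),(3,0,1,1,0,1,1),(3,0,1,1,0,1,1),(1,1,0,0,1,1,1),(2,1,0,1,0,1,1),(2,1,1,0,0,1,1)]), (16,[(0,0,1,1,1,1,1),(0,0,1,1,1,1,1),(0,0,1,1,1,1,1),(0,1,0,1,1,1,1),(0,1,0,1,1,1,1),(0,1,1,0,1,1,1),(0,1,1,1,0,1,1),(0,1,1,1,0,1,1)]), (17,[(0,1,1,1,1,1,1),(0,1,1,1,1,1,1),(0,1,1,1,1,1,1),(0,1,1,1,1,1,1)]), (10,[(0,1,1,1,2,2,1),(0,1,1,1,2,2,1),(0,1,1,2,1,2,1),(0,1,2,1,1,2,1),(0,2,1,1,1,2,1),(0,2,1,1,1,2,1),(0,2,1,1,1,2,1)])],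
   [(18,[(6,0,1,0,1,0,0),(7,0,0,1,1,0,0),(3,1,0,0,1,0,0),(3,1,0,0,1,0,0)]), (22,[(4,0,1,1,1,1,0),(0,1,1,0,1,1,0),(1,1,1,1,0,1,0),(2,1,1,0,1,1,0),(5,1,1,1,0,1,0),(7,1,0,1,1,1,0)]), (7,[(2,1,0,1,2,1,0),(8,0,0,2,2,1,0),(3,2,0,1,1,1,0),(1,2,1,1,0,1,0),(2,2,1,0,1,1,0)]), (13,[(0,1,2,1,1,1,0),(5,1,1,2,1,1,0),(4,1,2,2,0,1,0),(0,2,2,1,0,1,0)])],
   [(3,[(0,1,1,0,0,0,0),(0,1,1,0,0,0,0),(4,0,1,0,1,0,0),(4,0,1,1,0,0,0),(3,1,0,1,0,0,0),(5,0,1,1,0,0,0)]), (15,[(1,1,1,1,0,0,0),(1,1,1,1,0,0,0),(6,0,1,1,1,0,0),(2,1,1,0,1,0,0),(2,1,1,0,1,0,0),(4,0,1,1,1,0,0)]), (4,[(6,0,1,2,1,1,0),(2,1,2,0,1,1,0),(5,0,2,1,1,1,0),(6,0,2,1,1,1,0),(3,2,0,1,1,1,0),(3,2,0,1,1,1,0),(2,2,1,0,1,1,0)]), (9,[(5,0,1,2,2,1,0),(1,1,2,1,1,1,0),(0,1,2,2,0,1,0),(4,0,2,2,1,1,0),(2,2,1,0,2,1,0),(2,2,1,0,2,1,0),(1,2,1,2,0,1,0),(1,2,2,1,0,1,0),(2,2,2,0,1,1,0)])],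
   [(15,[(6,1,0,0,1,0,0),(7,0,1,1,0,0,0),(6,1,0,0,1,0,0),(2,1,0,1,0,0,0),(8,0,1,0,1,0,0),(9,0,0,1,1,0,0)]), (4,[(10,0,0,2,1,1,0),(0,1,2,0,0,1,0),(5,1,1,0,1,1,0),(3,1,1,1,0,1,0),(0,2,1,0,0,1,0),(5,2,0,0,1,1,0),(2,2,0,1,0,1,0)]), (9,[(5,1,0,1,2,1,0),(3,1,1,1,1,1,0),(4,1,1,1,1,1,0),(1,1,1,2,0,1,0),(2,2,0,1,1,1,0),(2,2,0,1,1,1,0),(3,2,0,2,0,1,0),(6,2,1,0,1,1,0),(0,2,2,0,0,1,0)]), (3,[(4,2,1,0,2,1,0),(4,2,1,0,2,1,0),(4,2,1,0,2,1,0),(1,2,1,2,0,1,0),(0,2,2,1,0,1,0),(0,2,2,1,0,1,0)])],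
   [(22,[(3,0,0,1,1,1,0),(2,0,0,1,1,1,0),(1,0,1,1,0,1,0),(6,0,1,0,1,1,0),(2,1,0,1,0,1,0),(5,1,0,0,1,1,0)]), (7,[(6,0,0,1,2,1,0),(5,0,0,1,2,1,0),(4,1,0,1,1,1,0),(1,1,1,1,0,1,0),(6,1,1,0,1,1,0)]), (13,[(2,0,1,2,1,1,0),(0,2,0,1,1,1,0),(3,1,1,2,0,1,0),(2,1,1,2,0,1,0)]), (18,[(2,1,1,2,1,1,0),(3,1,1,2,1,1,0),(4,1,1,1,2,1,0),(4,1,1,1,2,1,0)])],
   [(0,[(0,1,0,0,1,1,0),(3,0,1,0,1,1,0),(2,1,0,0,1,1,0)]), (5,[(3,0,0,1,2,1,0),(3,0,0,1,2,1,0),(1,0,2,0,1,1,0),(0,1,1,1,0,1,0),(0,2,0,0,1,1,0),(3,1,1,0,1,1,0)]), (20,[(2,0,1,1,2,1,0),(3,1,0,1,2,1,0),(3,1,0,1,2,1,0),(1,1,2,0,1,1,0),(1,1,2,0,1,1,0),(0,2,1,1,0,1,0),(0,2,1,1,0,1,0)]), (8,[(2,1,1,1,2,1,0),(2,1,1,1,2,1,0),(2,1,1,1,2,1,0),(2,1,1,1,2,1,0)])],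
   [(15,[(0,1,0,1,0,0,0),(0,1,0,1,0,0,0),(4,0,1,0,1,0,0),(1,1,0,0,1,0,0),(3,0,1,1,0,0,0),(2,1,0,0,1,0,0)]), (4,[(0,1,0,2,0,1,0),(1,1,1,0,1,1,0),(3,0,2,1,0,1,0),(0,1,1,1,0,1,0),(5,1,1,0,1,1,0),(5,1,1,0,1,1,0),(1,2,0,0,1,1,0)]), (9,[(3,0,1,2,1,1,0),(4,0,2,0,2,1,0),(2,1,1,1,1,1,0),(7,0,1,2,1,1,0),(1,2,0,0,2,1,0),(1,2,0,0,2,1,0),(4,1,1,1,1,1,0),(4,1,2,0,1,1,0),(1,2,1,0,1,1,0)]), (3,[(6,1,1,1,2,1,0),(6,1,1,1,2,1,0),(6,1,1,1,2,1,0),(7,1,1,2,1,1,0),(3,1,2,2,0,1,0),(3,1,2,2,0,1,0)])],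
   [(7,[(0,0,0,1,1,1,0),(3,0,0,1,1,1,0),(0,1,0,1,0,1,0),(2,1,1,0,0,1,0),(0,1,1,0,0,1,0)]), (1,[(1,0,1,1,1,1,0),(3,1,0,1,1,1,0),(2,1,1,0,1,1,0),(3,1,1,1,0,1,0)]), (18,[(1,1,1,1,1,1,0),(5,1,1,1,1,1,0),(4,1,1,1,1,1,0),(4,1,1,1,1,1,0)]), (22,[(3,1,1,1,2,2,0),(1,1,1,1,2,2,0),(2,1,2,1,1,2,0),(0,1,2,1,1,2,0),(1,2,1,1,1,2,0),(5,2,1,1,1,2,0)])],
   [(4,[(2,1,0,1,0,1,0),(3,0,2,0,0,1,0),(1,1,1,0,0,1,0),(5,0,1,1,0,1,0),(3,1,1,0,0,1,0),(7,1,0,0,1,1,0),(1,2,0,0,0,1,0)]), (9,[(1,1,0,1,1,1,0),(5,0,1,1,1,1,0),(6,0,1,1,1,1,0),(0,1,1,1,0,1,0),(7,1,0,0,2,1,0),(7,1,0,0,2,1,0),(5,1,0,2,0,1,0),(4,1,2,0,0,1,0),(3,1,2,0,0,1,0)]), (3,[(0,2,1,0,1,1,0),(0,2,1,0,1,1,0),(0,2,1,0,1,1,0),(0,2,1,1,0,1,0),(1,2,1,1,0,1,0),(1,2,1,1,0,1,0)]), (15,[(2,2,1,1,1,1,0),(2,2,1,1,1,1,0),(2,2,1,1,1,1,0),(1,2,1,1,1,1,0),(1,2,1,1,1,1,0),(0,2,1,1,1,1,0)])],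
   [(19,[(0,0,0,1,1,1,0),(0,0,1,1,0,1,0),(0,1,0,0,1,1,0),(1,1,0,0,1,1,0),(2,1,0,0,1,1,0),(1,1,0,1,0,1,0),(2,1,1,0,0,1,0),(3,1,1,0,0,1,0)]), (3,[(1,1,1,0,1,1,0),(1,1,1,0,1,1,0),(1,1,1,0,1,1,0),(1,1,1,1,0,1,0),(2,1,1,1,0,1,0),(2,1,1,1,0,1,0)]), (15,[(3,1,1,1,1,1,0),(3,1,1,1,1,1,0),(3,1,1,1,1,1,0),(2,1,1,1,1,1,0),(2,1,1,1,1,1,0),(1,1,1,1,1,1,0)]), (23,[(0,1,1,1,2,2,0),(1,1,1,1,2,2,0),(2,1,1,1,2,2,0),(0,1,1,2,1,2,0),(3,1,1,2,1,2,0),(3,2,1,1,1,2,0),(2,2,1,1,1,2,0),(1,2,1,1,1,2,0)])],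
   [(5,[(1,0,0,1,1,1,0),(1,0,0,1,1,1,0),(0,0,1,0,1,1,0),(2,0,1,1,0,1,0),(2,1,0,0,1,1,0),(1,1,1,0,0,1,0)]), (20,[(3,0,1,1,1,1,0),(1,1,0,1,1,1,0),(1,1,0,1,1,1,0),(0,1,1,0,1,1,0),(0,1,1,0,1,1,0),(2,1,1,1,0,1,0),(2,1,1,1,0,1,0)]), (8,[(3,1,1,1,1,1,0),(3,1,1,1,1,1,0),(3,1,1,1,1,1,0),(3,1,1,1,1,1,0)]), (0,[(2,1,1,1,2,2,0),(1,1,2,1,1,2,0),(3,2,1,1,1,2,0)])],
   [(18,[(1,1,0,0,1,0,0),(6,0,0,1,1,0,0),(0,1,1,0,0,0,0),(7,0,0,1,1,0,0)]), (22,[(6,0,0,1,2,1,0),(1,1,0,0,2,1,0),(2,0,2,1,0,1,0),(5,0,2,0,1,1,0),(3,1,1,1,0,1,0),(6,1,0,1,1,1,0)]), (7,[(0,1,1,1,1,1,0),(4,0,1,2,1,1,0),(5,1,1,1,1,1,0),(2,1,2,1,0,1,0),(0,2,2,0,0,1,0)]), (1,[(1,1,1,1,2,1,0),(4,1,1,2,1,1,0),(2,1,2,1,1,1,0),(6,1,1,2,1,1,0)])],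
   [(27,[(4,0,0,1,1,1,1),(0,1,0,0,1,1,1),(2,0,1,0,1,1,1),(4,0,0,2,0,1,1),(1,0,1,1,0,1,1),(0,1,0,1,0,1,1),(0,1,1,0,0,1,1),(5,0,1,0,1,1,1),(3,0,1,1,0,1,1),(1,1,1,0,0,1,1)]), (14,[(0,1,1,0,1,1,1),(6,0,1,1,1,1,1),(5,0,1,1,1,1,1),(1,1,1,0,1,1,1),(4,1,0,2,0,1,1),(1,1,1,1,0,1,1),(5,1,1,0,1,1,1),(3,1,1,1,0,1,1)]), (26,[(0,1,1,1,1,1,1),(4,0,1,2,1,1,1),(4,0,1,2,1,1,1),(1,1,1,1,1,1,1),(4,1,1,1,1,1,1),(5,1,1,1,1,1,1),(1,1,2,1,0,1,1),(1,1,2,1,0,1,1),(1,1,2,1,0,1,1)]), (21,[(1,1,2,1,1,1,1),(1,1,2,1,1,1,1),(1,1,2,1,1,1,1),(0,2,1,1,1,1,1),(0,2,1,1,1,1,1),(0,2,1,1,1,1,1),(4,1,1,2,1,1,1),(4,1,1,2,1,1,1),(4,1,1,2,1,1,1)])],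
   [(9,[(1,0,0,1,1,1,0),(0,0,1,0,1,1,0),(2,0,1,1,0,1,0),(5,0,1,1,0,1,0),(1,1,0,0,1,1,0),(1,1,0,0,1,1,0),(0,1,0,1,0,1,0),(0,1,1,0,0,1,0),(3,1,1,0,0,1,0)]), (3,[(2,1,1,0,1,1,0),(2,1,1,0,1,1,0),(2,1,1,0,1,1,0),(5,1,1,1,0,1,0),(8,1,1,1,0,1,0),(8,1,1,1,0,1,0)]), (15,[(0,1,1,1,1,1,0),(0,1,1,1,1,1,0),(0,1,1,1,1,1,0),(3,1,1,1,1,1,0),(3,1,1,1,1,1,0),(6,1,1,1,1,1,0)]), (4,[(7,1,1,2,1,2,0),(3,1,2,1,1,2,0),(1,1,2,1,1,2,0),(4,1,2,1,1,2,0),(1,2,1,1,1,2,0),(1,2,1,1,1,2,0),(3,2,1,1,1,2,0)])],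
   [(20,[(0,0,1,1,0,0,0),(5,0,0,1,1,0,0),(5,0,0,1,1,0,0),(1,1,1,0,0,0,0),(2,1,0,0,1,0,0),(4,0,1,1,0,0,0),(4,0,1,1,0,0,0)]), (8,[(0,1,1,1,0,0,0),(0,1,1,1,0,0,0),(0,1,1,1,0,0,0),(3,1,0,1,1,0,0)]), (0,[(4,0,1,1,2,1,0),(5,0,2,1,1,1,0),(0,2,1,1,0,1,0)]), (5,[(5,0,1,2,2,1,0),(5,0,1,2,2,1,0),(1,1,2,1,1,1,0),(4,0,2,2,1,1,0),(4,1,1,1,2,1,0),(5,1,2,1,1,1,0)])],
   [(1,[(0,0,1,1,0,0,0),(2,1,0,1,0,0,0),(7,0,1,0,1,0,0),(5,0,1,1,0,0,0)]), (18,[(3,1,1,0,1,0,0),(5,0,1,1,1,0,0),(1,1,1,1,0,0,0),(4,1,1,0,1,0,0)]), (22,[(5,0,1,1,2,1,0),(0,1,1,1,1,1,0),(6,0,2,1,1,1,0),(4,1,2,0,1,1,0),(0,2,1,1,0,1,0),(5,1,1,1,1,1,0)]), (7,[(4,1,1,1,2,1,0),(2,1,1,2,1,1,0),(1,2,1,2,0,1,0),(6,1,2,1,1,1,0),(4,2,2,0,1,1,0)])],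
   [(20,[(0,0,1,1,0,0,0),(5,0,0,1,1,0,0),(5,0,0,1,1,0,0),(1,1,1,0,0,0,0),(3,1,0,0,1,0,0),(4,0,1,1,0,0,0),(4,0,1,1,0,0,0)]), (8,[(0,1,1,1,0,0,0),(0,1,1,1,0,0,0),(0,1,1,1,0,0,0),(2,1,1,0,1,0,0)]), (0,[(4,0,1,1,2,1,0),(5,0,2,1,1,1,0),(0,2,1,1,0,1,0)]), (5,[(5,0,1,2,2,1,0),(5,0,1,2,2,1,0),(1,1,2,1,1,1,0),(4,0,2,2,1,1,0),(4,1,1,1,2,1,0),(5,1,2,1,1,1,0)])],
   [(1,[(1,0,1,1,0,0,0),(3,1,0,0,1,0,0),(7,0,1,0,1,0,0),(5,1,0,1,0,0,0)]), (18,[(2,1,1,0,1,0,0),(6,0,1,1,1,0,0),(4,1,1,0,1,0,0),(4,1,1,0,1,0,0)]), (22,[(5,1,0,1,2,1,0),(8,0,1,1,2,1,0),(7,0,2,1,1,1,0),(4,1,2,0,1,1,0),(1,2,1,1,0,1,0),(6,1,1,1,1,1,0)]), (2,[(2,1,1,1,2,1,0),(3,1,1,1,2,1,0),(0,2,1,1,1,1,0),(0,2,1,2,0,1,0),(2,2,2,0,1,1,0)])],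
   [(25,[(3,0,1,0,1,1,0),(0,1,0,0,1,1,0),(4,0,0,2,0,1,0),(5,0,0,1,1,1,0),(1,1,0,1,0,1,0),(6,0,1,0,1,1,0),(2,2,0,0,0,1,0),(6,1,0,0,1,1,0),(5,1,0,0,1,1,0)]), (9,[(7,0,0,1,2,1,0),(4,0,1,1,1,1,0),(5,0,1,1,1,1,0),(0,1,1,1,0,1,0),(3,1,1,0,1,1,0),(3,1,1,0,1,1,0),(4,1,0,2,0,1,0),(1,2,1,0,0,1,0),(2,2,1,0,0,1,0)]), (3,[(8,1,1,0,2,1,0),(8,1,1,0,2,1,0),(8,1,1,0,2,1,0),(0,2,1,1,0,1,0),(2,2,1,1,0,1,0),(2,2,1,1,0,1,0)]), (15,[(4,1,1,2,1,1,0),(4,1,1,2,1,1,0),(4,1,1,2,1,1,0),(3,1,2,1,1,1,0),(3,1,2,1,1,1,0),(5,1,1,1,2,1,0)])],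
   [(12,[(0,0,1,1,0,0,0),(9,0,1,0,1,0,0),(7,1,0,0,1,0,0),(7,1,0,0,1,0,0),(8,1,0,1,0,0,0),(5,1,1,0,0,0,0),(5,1,1,0,0,0,0)]), (15,[(3,1,1,0,1,0,0),(9,0,1,1,1,0,0),(3,1,1,0,1,0,0),(5,1,1,0,1,0,0),(5,1,1,0,1,0,0),(4,1,1,0,1,0,0)]), (4,[(2,1,1,2,0,1,0),(1,1,2,1,0,1,0),(5,1,2,0,1,1,0),(0,1,2,1,0,1,0),(1,2,1,1,0,1,0),(6,2,0,1,1,1,0),(5,2,1,0,1,1,0)]), (9,[(5,1,1,1,2,1,0),(0,1,2,1,1,1,0),(4,1,2,1,1,1,0),(8,1,1,2,1,1,0),(6,2,0,1,2,1,0),(6,2,0,1,2,1,0),(0,2,1,2,0,1,0),(2,2,2,1,0,1,0),(1,2,2,1,0,1,0)])]]"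

definition bcert :: "(nat \<times> (nat \<times> nat \<times> nat \<times> nat \<times> nat \<times> nat) list) list" where
  "bcert = [(16,[(0,1,1,1,1,1),(0,1,1,1,1,1),(0,1,1,1,1,1),(1,0,1,1,1,1),(1,0,1,1,1,1),(1,1,0,1,1,1),(1,1,1,0,1,1),(1,1,1,0,1,1)]), (17,[(1,1,1,1,1,1),(1,1,1,1,1,1),(1,1,1,1,1,1),(1,1,1,1,1,1)]), (10,[(1,1,1,2,2,1),(1,1,1,2,2,1),(1,1,2,1,2,1),(1,2,1,1,2,1),(2,1,1,1,2,1),(2,1,1,1,2,1),(2,1,1,1,2,1)]), (11,[(1,1,2,2,2,1),(1,2,1,2,2,1),(1,2,1,2,2,1),(1,2,1,2,2,1),(1,2,2,1,2,1),(1,2,2,1,2,1),(1,2,2,1,2,1),(2,1,1,2,2,1),(2,1,2,1,2,1),(2,2,1,1,2,1),(2,2,1,1,2,1)])]"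

definition check_all :: bool where
  "check_all = list_all2 (\<lambda>S row. length row = 4 \<and>
      list_all2 (\<lambda>k0 (j,ws). j < length fam \<and>
          list_all2 (\<lambda>\<sigma> (p,w). p < length S \<and> tchk k0 (S!p) \<sigma> w) (fam!j) ws) [2,3,4,5] row) fam cert"

definition check_base :: bool where
  "check_base = list_all2 (\<lambda>n (j,ws). j < length fam \<and> list_all2 (\<lambda>\<sigma> w. bchk n \<sigma> w) (fam!j) ws) [3,4,5,6] bcert"

lemma check_all: check_all
  by code_simp

lemma check_base: check_base
  by code_simp



definition ktrans :: "nat \<Rightarrow> (klein\<Rightarrow>nat) \<Rightarrow> (klein\<Rightarrow>nat) \<Rightarrow> klein \<Rightarrow> (klein\<Rightarrow>nat) \<Rightarrow> (klein\<Rightarrow>nat) \<Rightarrow> klein \<Rightarrow> bool" where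
 "ktrans k Dv' De' y Dv De r \<longleftrightarrow> (\<exists>M t t'. Msum M = k \<and> (\<forall>a. M a + Dv a = Dv' a + t) \<and> 0 < M r
     \<and> (\<forall>a. De a + (if a = y + zs M then 1 else 0) = De' a + t'))"

definition basec :: "nat \<Rightarrow> (klein\<Rightarrow>nat) \<Rightarrow> (klein\<Rightarrow>nat) \<Rightarrow> klein \<Rightarrow> bool" where
 "basec n Dv De r \<longleftrightarrow> (\<exists>M t t'. Msum M = n \<and> (\<forall>a. M a + Dv a = t) \<and> 0 < M r
     \<and> (\<forall>a. De a + (if a = zs M then 1 else 0) = t'))"

lemma bit_cases: "(x::bit) = 0 \<or> x = 1"
  using bit_not_zero_iff by blast

lemma klein_in: "(a::klein) \<in> set kl"
proof -
  obtain x y where "a = (x,y)" by (cases a)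
  then show ?thesis using bit_cases[of x] bit_cases[of y] by (auto simp: kl_def)
qed

lemma klein_cases: "((a::klein) = (0,0) \<Longrightarrow> P) \<Longrightarrow> (a = (1,0) \<Longrightarrow> P) \<Longrightarrow> (a = (0,1) \<Longrightarrow> P) \<Longrightarrow> (a = (1,1) \<Longrightarrow> P) \<Longrightarrow> P"
  using klein_in[of a] by (auto simp: kl_def)

lemma list_all_kl: "list_all P kl \<Longrightarrow> P (a::klein)"
  using klein_in[of a] by (simp add: list_all_iff)

lemma tchk_sound:
  assumes "tchk k (dv',de',y) (dv,de,r) w"
  shows "ktrans k (ind dv') (ind de') y (ind dv) (ind de) r"
proof -
  obtain m0 m1 m2 m3 t t' where w: "w = (m0,m1,m2,m3,t,t')" by (cases w) auto
  have h: "Msum (mk m0 m1 m2 m3) = k" "list_all (\<lambda>a. mk m0 m1 m2 m3 a + ind dv a = ind dv' a + t) kl"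
     "0 < mk m0 m1 m2 m3 r"
     "list_all (\<lambda>a. ind de a + (if a = y + zs (mk m0 m1 m2 m3) then 1 else 0) = ind de' a + t') kl"
    using assms unfolding w tchk.simps by blast+
  show ?thesis unfolding ktrans_def
    apply (rule exI[of _ "mk m0 m1 m2 m3"], rule exI[of _ t], rule exI[of _ t'])
    using h list_all_kl[OF h(2)] list_all_kl[OF h(4)] by blast
qed

lemma bchk_sound:
  assumes "bchk n (dv,de,r) w"
  shows "basec n (ind dv) (ind de) r"
proof -
  obtain m0 m1 m2 m3 t t' where w: "w = (m0,m1,m2,m3,t,t')" by (cases w) auto
  have h: "Msum (mk m0 m1 m2 m3) = n" "list_all (\<lambda>a. mk m0 m1 m2 m3 a + ind dv a = t) kl"
     "0 < mk m0 m1 m2 m3 r"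
     "list_all (\<lambda>a. ind de a + (if a = zs (mk m0 m1 m2 m3) then 1 else 0) = t') kl"
    using assms unfolding w bchk.simps by blast+
  show ?thesis unfolding basec_def
    apply (rule exI[of _ "mk m0 m1 m2 m3"], rule exI[of _ t], rule exI[of _ t'])
    using h list_all_kl[OF h(2)] list_all_kl[OF h(4)] by blast
qed

lemma zs_Suc: "zs (\<lambda>a. Suc (M a)) = zs M"
  unfolding zs_def by (cases "odd (M (1,0))"; cases "odd (M (0,1))"; cases "odd (M (1,1))") (simp_all add: zero_prod_def)

lemma Msum_Suc: "Msum (\<lambda>a. Suc (M a)) = Msum M + 4"
  unfolding Msum_def by simp

lemma trans_lift4:
  assumes "ktrans k Dv' De' y Dv De r" shows "ktrans (k + 4) Dv' De' y Dv De r"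
proof -
  obtain M t t' where M: "Msum M = k" "\<forall>a. M a + Dv a = Dv' a + t" "0 < M r"
     "\<forall>a. De a + (if a = y + zs M then 1 else 0) = De' a + t'"
    using assms unfolding ktrans_def by blast
  show ?thesis unfolding ktrans_def
    apply (rule exI[of _ "\<lambda>a. Suc (M a)"], rule exI[of _ "Suc t"], rule exI[of _ t'])
    using M by (simp add: zs_Suc Msum_Suc)
qed

lemma trans_lift: "ktrans k Dv' De' y Dv De r \<Longrightarrow> ktrans (k + 4*q) Dv' De' y Dv De r"
proof (induction q)
  case 0 then show ?case by simp
next
  case (Suc q)
  have "k + 4 * Suc q = (k + 4*q) + 4" by simp
  have "ktrans (k + 4*q + 4) Dv' De' y Dv De r" by (rule trans_lift4[OF Suc.IH[OF Suc.prems]])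
  then show ?case by (simp add: algebra_simps)
qed

lemma basec_lift4:
  assumes "basec k Dv De r" shows "basec (k + 4) Dv De r"
proof -
  obtain M t t' where M: "Msum M = k" "\<forall>a. M a + Dv a = t" "0 < M r"
     "\<forall>a. De a + (if a = zs M then 1 else 0) = t'"
    using assms unfolding basec_def by blast
  show ?thesis unfolding basec_def
    apply (rule exI[of _ "\<lambda>a. Suc (M a)"], rule exI[of _ "Suc t"], rule exI[of _ t'])
    using M by (simp add: zs_Suc Msum_Suc)
qed

lemma basec_lift: "basec k Dv De r \<Longrightarrow> basec (k + 4*q) Dv De r"
proof (induction q)
  case 0 then show ?case by simp
next
  case (Suc q)
  have "k + 4 * Suc q = (k + 4*q) + 4" by simp
  have "basec (k + 4*q + 4) Dv De r" by (rule basec_lift4[OF Suc.IH[OF Suc.prems]])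
  then show ?case by (simp add: algebra_simps)
qed

lemma step_ok:
  assumes S: "S \<in> set fam" and k: "2 \<le> k"
  shows "\<exists>S''\<in>set fam. \<forall>(dv,de,r)\<in>set S''. \<exists>(dv',de',y)\<in>set S. ktrans k (ind dv') (ind de') y (ind dv) (ind de) r"
proof -
  obtain i where i: "i < length fam" "S = fam ! i" using S by (metis in_set_conv_nth)
  define q where "q = (k - 2) div 4"
  define idx where "idx = (k - 2) mod 4"
  have idx: "idx < 4" unfolding idx_def by simp
  have kq: "k = (idx + 2) + 4*q" using k unfolding q_def idx_def by simp
  have ca: "check_all" by (rule check_all)
  have row: "length (cert!i) = 4 \<and>
      list_all2 (\<lambda>k0 (j,ws). j < length fam \<and>
          list_all2 (\<lambda>\<sigma> (p,w). p < length S \<and> tchk k0 (S!p) \<sigma> w) (fam!j) ws) [2,3,4,5] (cert!i)"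
    using list_all2_nthD[OF ca[unfolded check_all_def] i(1)] i(2) by simp
  have nthk: "[2,3,4,5::nat] ! idx = idx + 2" using idx
    by (auto simp: less_Suc_eq numeral_eq_Suc)
  obtain j ws where jw: "cert!i!idx = (j,ws)" by (cases "cert!i!idx")
  have P: "(\<lambda>k0 (j,ws). j < length fam \<and>
          list_all2 (\<lambda>\<sigma> (p,w). p < length S \<and> tchk k0 (S!p) \<sigma> w) (fam!j) ws) ([2,3,4,5] ! idx) (cert!i!idx)"
    using list_all2_nthD[OF conjunct2[OF row]] idx by simp
  have J: "j < length fam \<and> list_all2 (\<lambda>\<sigma> (p,w). p < length S \<and> tchk (idx+2) (S!p) \<sigma> w) (fam!j) ws"
    using P unfolding jw nthk by simp
  show ?thesis
  proof (rule bexI[of _ "fam!j"])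
    show "fam ! j \<in> set fam" using J by simp
    show "\<forall>(dv,de,r)\<in>set (fam!j). \<exists>(dv',de',y)\<in>set S. ktrans k (ind dv') (ind de') y (ind dv) (ind de) r"
    proof
      fix x assume "x \<in> set (fam!j)"
      then obtain l where l: "l < length (fam!j)" "x = fam!j!l" by (metis in_set_conv_nth)
      obtain p w where pw: "ws!l = (p,w)" by (cases "ws!l")
      have "(\<lambda>\<sigma> (p,w). p < length S \<and> tchk (idx+2) (S!p) \<sigma> w) (fam!j!l) (ws!l)"
        using list_all2_nthD[OF conjunct2[OF J] l(1)] .
      then have "p < length S \<and> tchk (idx+2) (S!p) x w" using l(2) pw by simp
      then show "case x of (dv,de,r) \<Rightarrow> \<exists>(dv',de',y)\<in>set S. ktrans k (ind dv') (ind de') y (ind dv) (ind de) r"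
      proof -
        obtain dv de r where fields: "x = (dv,de,r)" by (metis prod.collapse)
        obtain dv' de' y where Sp: "S!p = (dv',de',y)" by (metis prod.collapse)
        have "tchk (idx+2) (dv',de',y) (dv,de,r) w"
          using \<open>p < length S \<and> tchk (idx+2) (S!p) x w\<close> Sp fields by (simp del: tchk.simps)
        then have "ktrans (idx+2) (ind dv') (ind de') y (ind dv) (ind de) r" by (rule tchk_sound)
        then have "ktrans (idx + 2 + 4*q) (ind dv') (ind de') y (ind dv) (ind de) r" by (rule trans_lift)
        then have "ktrans k (ind dv') (ind de') y (ind dv) (ind de) r" using kq by simp
        moreover have "(dv',de',y) \<in> set S" using Sp \<open>p < length S \<and> tchk (idx+2) (S!p) x w\<close> by (metis nth_mem)
        ultimately show ?thesis using fields by auto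
      qed
    qed
  qed
qed



lemma klein_disj: "(a::klein) = (0,0) \<or> a = (1,0) \<or> a = (0,1) \<or> a = (1,1)"
proof -
  obtain x y where "a = (x,y)" by (cases a)
  then show ?thesis using bit_cases[of x] bit_cases[of y] by auto
qed

lemma Msum_eq0: "Msum M = 0 \<Longrightarrow> M a = 0"
  using klein_disj[of a] unfolding Msum_def by auto

lemma Msum_pos: "Msum M > 0 \<Longrightarrow> \<exists>b. M b > 0"
  unfolding Msum_def by (metis add_is_0 gr0I)

lemma Msum_dec: "M b > 0 \<Longrightarrow> Msum (M(b := M b - 1)) = Msum M - 1"
  using klein_disj[of b] unfolding Msum_def by auto

lemma zs_upd: "zs (\<lambda>a. if b = a then Suc (N a) else N a) = b + zs N"
proof -
  have "b = (0,0) \<or> b = (1,0) \<or> b = (0,1) \<or> b = (1,1)" by (rule klein_disj)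
  then show ?thesis
  proof (elim disjE)
    assume b: "b = (0,0)"
    have "(\<lambda>a. if b = a then Suc (N a) else N a) (1,0) = N (1,0)"
         "(\<lambda>a. if b = a then Suc (N a) else N a) (0,1) = N (0,1)"
         "(\<lambda>a. if b = a then Suc (N a) else N a) (1,1) = N (1,1)" using b by auto
    then show ?thesis unfolding zs_def using b by (simp add: zero_prod_def)
  next
    assume b: "b = (1,0)"
    show ?thesis unfolding zs_def using b
      by (cases "odd (N (1,0))") (simp_all add: zero_prod_def)
  next
    assume b: "b = (0,1)"
    show ?thesis unfolding zs_def using b
      by (cases "odd (N (0,1))") (simp_all add: zero_prod_def)
  next
    assume b: "b = (1,1)"
    show ?thesis unfolding zs_def using b
      by (cases "odd (N (1,1))") (simp_all add: zero_prod_def)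
  qed
qed

lemma card_upd:
  assumes "finite X" "v \<notin> X"
  shows "card {w\<in>insert v X. (f(v:=b)) w = a} = (if b = a then Suc (card {w\<in>X. f w = a}) else card {w\<in>X. f w = a})"
proof -
  have "{w\<in>insert v X. (f(v:=b)) w = a} = (if b = a then insert v {w\<in>X. f w = a} else {w\<in>X. f w = a})"
    using assms(2) by auto
  then show ?thesis using assms by (simp add: card_insert_if)
qed

lemma label_exists:
  assumes "finite X"
  shows "card X = Msum M \<Longrightarrow> \<exists>f. \<forall>a. card {v\<in>X. f v = a} = M a"
  using assms
proof (induction X arbitrary: M rule: finite_induct)
  case empty
  then show ?case using Msum_eq0[of M] by auto
next
  case (insert v X)
  then obtain b where b: "M b > 0" using Msum_pos[of M] by auto
  have "card X = Msum (M(b := M b - 1))" using insert(1,2,4) Msum_dec[of M b, OF b] by simp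
  then obtain f where f: "\<And>a. card {v\<in>X. f v = a} = (M(b := M b - 1)) a" using insert.IH by blast
  show ?case
  proof (rule exI[of _ "f(v:=b)"], intro allI)
    fix a
    have "card {w\<in>insert v X. (f(v:=b)) w = a} = (if b = a then Suc (card {w\<in>X. f w = a}) else card {w\<in>X. f w = a})"
      by (rule card_upd[OF insert(1,2)])
    then show "card {w\<in>insert v X. (f(v:=b)) w = a} = M a"
      using f[of a] b by auto
  qed
qed

lemma label_exists_pt:
  assumes "finite X" "x \<in> X" "card X = Msum M" "0 < M r"
  shows "\<exists>g. g x = r \<and> (\<forall>a. card {v\<in>X. g v = a} = M a)"
proof -
  have "card (X - {x}) = Msum (M(r := M r - 1))" using assms Msum_dec[of M r] by simp
  then obtain f where f: "\<And>a. card {v\<in>X-{x}. f v = a} = (M(r := M r - 1)) a"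
    using label_exists[of "X - {x}"] assms by blast
  have eqX: "insert x (X - {x}) = X" using assms(2) by auto
  show ?thesis
  proof (rule exI[of _ "f(x:=r)"], intro conjI allI)
    show "(f(x:=r)) x = r" by simp
    fix a
    have "card {w\<in>insert x (X-{x}). (f(x:=r)) w = a} = (if r = a then Suc (card {w\<in>X-{x}. f w = a}) else card {w\<in>X-{x}. f w = a})"
      by (rule card_upd) (use assms in auto)
    then have "card {w\<in>X. (f(x:=r)) w = a} = (if r = a then Suc (card {w\<in>X-{x}. f w = a}) else card {w\<in>X-{x}. f w = a})"
      unfolding eqX .
    then show "card {w\<in>X. (f(x:=r)) w = a} = M a"
      using f[of a] assms(4) by auto
  qed
qed

lemma sum_zs:
  fixes f :: "'v \<Rightarrow> klein"
  assumes "finite X"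
  shows "sum f X = zs (\<lambda>a. card {v\<in>X. f v = a})"
  using assms
proof (induction X rule: finite_induct)
  case empty
  then show ?case by (simp add: zs_def zero_prod_def)
next
  case (insert v X)
  have e: "(\<lambda>a. card {w\<in>insert v X. f w = a}) = (\<lambda>a. if f v = a then Suc (card {w\<in>X. f w = a}) else card {w\<in>X. f w = a})"
  proof
    fix a
    have "{w\<in>insert v X. f w = a} = (if f v = a then insert v {w\<in>X. f w = a} else {w\<in>X. f w = a})" by auto
    then show "card {w\<in>insert v X. f w = a} = (if f v = a then Suc (card {w\<in>X. f w = a}) else card {w\<in>X. f w = a})"
      using insert(1,2) by (auto simp: card_insert_if)
  qed
  have "sum f (insert v X) = f v + zs (\<lambda>a. card {w\<in>X. f w = a})" using insert by simp
  also have "\<dots> = zs (\<lambda>a. card {w\<in>insert v X. f w = a})"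
    unfolding e by (rule zs_upd[symmetric])
  finally show ?case .
qed



definition realz :: "'v set list \<Rightarrow> (klein \<Rightarrow> nat) \<Rightarrow> (klein \<Rightarrow> nat) \<Rightarrow> klein \<Rightarrow> bool" where
 "realz es Dv De r \<longleftrightarrow> (\<forall>x \<in> hd es - \<Union>(set (tl es)). \<exists>c. c x = r \<and>
     (\<exists>C. \<forall>a. vcount es c a + Dv a = C) \<and> (\<exists>C. \<forall>a. ecount es c a + De a = C))"

lemma hp_props:
  assumes "hyperpath L"
  shows "L \<noteq> []"
    and "\<And>i. i < length L \<Longrightarrow> finite (L!i)"
    and "\<And>i. i + 1 < length L \<Longrightarrow> card (L!i \<inter> L!(i+1)) = 1"
    and "\<And>i j. i < length L \<Longrightarrow> j < length L \<Longrightarrow> i + 2 \<le> j \<Longrightarrow> L!i \<inter> L!j = {}"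
    and "\<And>i. i < length L \<Longrightarrow> card (L!i) \<ge> 3"
  using assms unfolding hyperpath_def path_hypergraph_def by auto

lemma hp_tl:
  assumes "hyperpath (e # es)" "es \<noteq> []"
  shows "hyperpath es"
proof -
  note P = hp_props[OF assms(1)]
  show ?thesis unfolding hyperpath_def path_hypergraph_def
  proof (intro conjI allI impI)
    show "1 \<le> length es" using assms(2) by (cases es) auto
    fix i assume "i < length es" then show "finite (es!i)" using P(2)[of "Suc i"] by simp
  next
    fix i assume "i + 1 < length es" then show "card (es!i \<inter> es!(i+1)) = 1" using P(3)[of "Suc i"] by simp
  next
    fix i j assume "i < length es" "j < length es" "i + 2 \<le> j"
    then show "es!i \<inter> es!j = {}" using P(4)[of "Suc i" "Suc j"] by simp
  next
    fix i assume "i < length es" then show "card (es!i) \<ge> 3" using P(5)[of "Suc i"] by simp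
  qed
qed

lemma hv_finite: "hyperpath es \<Longrightarrow> finite (hvertices es)"
proof -
  assume h: "hyperpath es"
  have "\<forall>X\<in>set es. finite X"
  proof
    fix X assume "X \<in> set es"
    then obtain i where "i < length es" "X = es!i" by (metis in_set_conv_nth)
    then show "finite X" using hp_props(2)[OF h] by simp
  qed
  then show ?thesis unfolding hvertices_def by simp
qed

lemma hp_cons:
  assumes "hyperpath (e # es)" "es \<noteq> []"
  shows "finite e" "card e \<ge> 3" "e \<notin> set es"
    "\<exists>s. e \<inter> hvertices es = {s} \<and> s \<in> hd es \<and> s \<notin> \<Union>(set (tl es))"
proof -
  note P = hp_props[OF assms(1)]
  show fe: "finite e" using P(2)[of 0] by simp
  show ce: "card e \<ge> 3" using P(5)[of 0] by simp
  have c1: "card (e \<inter> hd es) = 1" using P(3)[of 0] assms(2) by (cases es) auto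
  have dj: "e \<inter> es!j = {}" if "j < length es" "1 \<le> j" for j
    using P(4)[of 0 "Suc j"] that by simp
  have djt: "e \<inter> \<Union>(set (tl es)) = {}"
  proof -
    have "\<And>X. X \<in> set (tl es) \<Longrightarrow> e \<inter> X = {}"
    proof -
      fix X assume "X \<in> set (tl es)"
      then obtain j where j: "j < length (tl es)" "X = tl es ! j" by (metis in_set_conv_nth)
      then have "X = es ! Suc j" "Suc j < length es" by (auto simp: nth_tl)
      then show "e \<inter> X = {}" using dj by auto
    qed
    then show ?thesis by blast
  qed
  obtain s where s: "e \<inter> hd es = {s}" using c1 by (metis card_1_singletonE)
  have hv: "hvertices es = hd es \<union> \<Union>(set (tl es))" unfolding hvertices_def using assms(2) by (cases es) auto
  show "\<exists>s. e \<inter> hvertices es = {s} \<and> s \<in> hd es \<and> s \<notin> \<Union>(set (tl es))"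
  proof (rule exI[of _ s], intro conjI)
    show "e \<inter> hvertices es = {s}" unfolding hv Int_Un_distrib s djt by simp
    have "s \<in> e \<inter> hd es" using s by simp
    then show "s \<in> hd es" by simp
    show "s \<notin> \<Union>(set (tl es))" using \<open>s \<in> e \<inter> hd es\<close> djt by blast
  qed
  show "e \<notin> set es"
  proof
    assume "e \<in> set es"
    then obtain j where j: "j < length es" "e = es!j" by (metis in_set_conv_nth)
    show False
    proof (cases j)
      case 0
      then have "e = hd es" using j assms(2) by (cases es) auto
      then show False using c1 ce by simp
    next
      case (Suc j')
      then have "e \<inter> e = {}" using dj j by auto
      then show False using ce by auto
    qed
  qed
qed

lemma hp_single:
  assumes "hyperpath [e]"
  shows "finite e" "card e \<ge> 3"
  using hp_props(2)[OF assms, of 0] hp_props(5)[OF assms, of 0] by auto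

lemma priv_ne:
  assumes "hyperpath es"
  shows "\<exists>x. x \<in> hd es - \<Union>(set (tl es))"
proof (cases es)
  case Nil then show ?thesis using hp_props(1)[OF assms] by simp
next
  case (Cons e es')
  show ?thesis
  proof (cases "es' = []")
    case True
    then have "card e \<ge> 3" using hp_single assms Cons by auto
    then have "e \<noteq> {}" by auto
    then show ?thesis using Cons True by auto
  next
    case False
    have h: "hyperpath (e # es')" using assms Cons by simp
    obtain s where s: "e \<inter> hvertices es' = {s}" using hp_cons(4)[OF h False] by blast
    have "card e \<ge> 3" "finite e" using hp_cons(1,2)[OF h False] by auto
    have "\<not> e \<subseteq> {s}"
    proof
      assume "e \<subseteq> {s}"
      then have "card e \<le> 1" using card_mono[of "{s}" e] by simp
      then show False using \<open>card e \<ge> 3\<close> by simp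
    qed
    then obtain x where "x \<in> e - {s}" by blast
    then have "x \<in> e - hvertices es'" using s by blast
    then show ?thesis using Cons unfolding hvertices_def by auto
  qed
qed



lemma real_step:
  assumes hp: "hyperpath (e # es)" and ne: "es \<noteq> []" and R: "realz es Dv' De' y"
    and T: "ktrans (card e - 1) Dv' De' y Dv De r"
  shows "realz (e # es) Dv De r"
proof -
  have fe: "finite e" and ne_e: "e \<notin> set es" using hp_cons[OF hp ne] by auto
  obtain s where s: "e \<inter> hvertices es = {s}" and s1: "s \<in> hd es" and s2: "s \<notin> \<Union>(set (tl es))"
    using hp_cons(4)[OF hp ne] by blast
  have hpt: "hyperpath es" using hp_tl[OF hp ne] .
  have fhv: "finite (hvertices es)" using hv_finite[OF hpt] .
  have sH: "s \<in> hvertices es" and se: "s \<in> e" using s by auto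
  define X where "X = e - {s}"
  have sX: "s \<notin> X" using X_def by auto
  have eX: "e = insert s X" using se X_def by auto
  have XH: "X \<inter> hvertices es = {}" using s X_def by auto
  have fX: "finite X" using fe X_def by simp
  have cX: "card X = card e - 1" using fe se X_def by simp
  have hvc: "hvertices (e # es) = X \<union> hvertices es"
  proof -
    have "hvertices (e # es) = e \<union> hvertices es" unfolding hvertices_def by simp
    then show ?thesis using eX sH by auto
  qed
  obtain M t t' where M: "Msum M = card e - 1" "\<And>a. M a + Dv a = Dv' a + t" "0 < M r"
      "\<And>a. De a + (if a = y + zs M then 1 else 0) = De' a + t'"
    using T unfolding ktrans_def by blast
  have sp: "s \<in> hd es - \<Union>(set (tl es))" using s1 s2 by simp
  obtain c' C1 C2 where c': "c' s = y" and C1: "\<And>a. vcount es c' a + Dv' a = C1"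
      and C2: "\<And>a. ecount es c' a + De' a = C2"
    using R sp unfolding realz_def by blast
  show ?thesis unfolding realz_def
  proof
    fix x assume x: "x \<in> hd (e # es) - \<Union>(set (tl (e # es)))"
    have "\<Union>(set es) = hvertices es" unfolding hvertices_def by simp
    then have xX: "x \<in> X" using x sH X_def by auto
    obtain g where g: "g x = r" "\<And>a. card {v\<in>X. g v = a} = M a"
      using label_exists_pt[OF fX xX, of M r] cX M(1,3) by auto
    define c where "c v = (if v \<in> X then g v else c' v)" for v
    have vc: "vcount (e#es) c a = M a + vcount es c' a" for a
    proof -
      have "{v \<in> hvertices (e#es). c v = a} = {v\<in>X. g v = a} \<union> {v \<in> hvertices es. c' v = a}"
        using hvc XH unfolding c_def by auto
      moreover have "{v\<in>X. g v = a} \<inter> {v \<in> hvertices es. c' v = a} = {}" using XH by auto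
      ultimately have "card {v \<in> hvertices (e#es). c v = a} = card {v\<in>X. g v = a} + card {v \<in> hvertices es. c' v = a}"
        using fX fhv by (simp add: card_Un_disjoint)
      then show ?thesis using g(2) unfolding vcount_def by simp
    qed
    have ind_eq: "induced c e'' = induced c' e''" if "e'' \<in> set es" for e''
    proof -
      have "e'' \<subseteq> hvertices es" using that unfolding hvertices_def by auto
      then have "\<forall>v\<in>e''. c v = c' v" using XH unfolding c_def by auto
      then show ?thesis unfolding induced_def by (intro sum.cong) auto
    qed
    have Mfun: "(\<lambda>a. card {v\<in>X. g v = a}) = M" using g(2) by auto
    have ind_e: "induced c e = y + zs M"
    proof -
      have "induced c e = c s + sum c X" unfolding induced_def eX using fX sX by simp
      also have "c s = y" using sX c' unfolding c_def by simp
      also have "sum c X = sum g X" unfolding c_def by (intro sum.cong) auto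
      also have "sum g X = zs M" using sum_zs[OF fX, of g] Mfun by simp
      finally show ?thesis .
    qed
    have ec: "ecount (e#es) c a = (if a = y + zs M then 1 else 0) + ecount es c' a" for a
    proof -
      have A: "{e''\<in>set es. induced c e'' = a} = {e''\<in>set es. induced c' e'' = a}" using ind_eq by auto
      show ?thesis
      proof (cases "a = y + zs M")
        case True
        then have "{e''\<in>set (e#es). induced c e'' = a} = insert e {e''\<in>set es. induced c' e'' = a}"
          using A ind_e by auto
        then show ?thesis using True ne_e unfolding ecount_def by simp
      next
        case False
        then have "{e''\<in>set (e#es). induced c e'' = a} = {e''\<in>set es. induced c' e'' = a}"
          using A ind_e by auto
        then show ?thesis using False unfolding ecount_def by simp
      qed
    qed
    show "\<exists>c. c x = r \<and> (\<exists>C. \<forall>a. vcount (e#es) c a + Dv a = C) \<and> (\<exists>C. \<forall>a. ecount (e#es) c a + De a = C)"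
    proof (rule exI[of _ c], intro conjI)
      show "c x = r" using xX g(1) unfolding c_def by simp
      show "\<exists>C. \<forall>a. vcount (e#es) c a + Dv a = C"
      proof (rule exI[of _ "C1 + t"], intro allI)
        fix a show "vcount (e#es) c a + Dv a = C1 + t" using vc[of a] M(2)[of a] C1[of a] by linarith
      qed
      show "\<exists>C. \<forall>a. ecount (e#es) c a + De a = C"
      proof (rule exI[of _ "C2 + t'"], intro allI)
        fix a show "ecount (e#es) c a + De a = C2 + t'" using ec[of a] M(4)[of a] C2[of a] by linarith
      qed
    qed
  qed
qed

lemma real_base:
  assumes hp: "hyperpath [e]" and B: "basec (card e) Dv De r"
  shows "realz [e] Dv De r"
proof -
  have fe: "finite e" using hp_single[OF hp] by simp
  obtain M t t' where M: "Msum M = card e" "\<And>a. M a + Dv a = t" "0 < M r"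
      "\<And>a. De a + (if a = zs M then 1 else 0) = t'"
    using B unfolding basec_def by blast
  show ?thesis unfolding realz_def
  proof
    fix x assume "x \<in> hd [e] - \<Union>(set (tl [e]))"
    then have xe: "x \<in> e" by simp
    obtain g where g: "g x = r" "\<And>a. card {v\<in>e. g v = a} = M a"
      using label_exists_pt[OF fe xe, of M r] M(1,3) by auto
    have Mfun: "(\<lambda>a. card {v\<in>e. g v = a}) = M" using g(2) by auto
    have ind_e: "induced g e = zs M" unfolding induced_def using sum_zs[OF fe, of g] Mfun by simp
    have vc: "vcount [e] g a = M a" for a unfolding vcount_def hvertices_def using g(2) by simp
    have ec: "ecount [e] g a = (if a = zs M then 1 else 0)" for a
    proof (cases "a = zs M")
      case True
      then have "{e''\<in>set [e]. induced g e'' = a} = {e}" using ind_e by auto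
      then show ?thesis using True unfolding ecount_def by simp
    next
      case False
      then have "{e''\<in>set [e]. induced g e'' = a} = {}" using ind_e by auto
      then show ?thesis using False unfolding ecount_def by simp
    qed
    show "\<exists>c. c x = r \<and> (\<exists>C. \<forall>a. vcount [e] c a + Dv a = C) \<and> (\<exists>C. \<forall>a. ecount [e] c a + De a = C)"
    proof (rule exI[of _ g], intro conjI)
      show "g x = r" by (rule g(1))
      show "\<exists>C. \<forall>a. vcount [e] g a + Dv a = C"
      proof (rule exI[of _ t], intro allI)
        fix a show "vcount [e] g a + Dv a = t" using vc[of a] M(2)[of a] by linarith
      qed
      show "\<exists>C. \<forall>a. ecount [e] g a + De a = C"
      proof (rule exI[of _ t'], intro allI)
        fix a show "ecount [e] g a + De a = t'" using ec[of a] M(4)[of a] by linarith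
      qed
    qed
  qed
qed



lemma base_ok:
  assumes n: "3 \<le> n"
  shows "\<exists>S\<in>set fam. \<forall>(dv,de,r)\<in>set S. basec n (ind dv) (ind de) r"
proof -
  define q where "q = (n - 3) div 4"
  define idx where "idx = (n - 3) mod 4"
  have idx: "idx < 4" unfolding idx_def by simp
  have nq: "n = (idx + 3) + 4*q" using n unfolding q_def idx_def by simp
  have cb: "check_base" by (rule check_base)
  have nthk: "[3,4,5,6::nat] ! idx = idx + 3" using idx
    by (auto simp: less_Suc_eq numeral_eq_Suc)
  obtain j ws where jw: "bcert!idx = (j,ws)" by (cases "bcert!idx")
  have P: "(\<lambda>n (j,ws). j < length fam \<and> list_all2 (\<lambda>\<sigma> w. bchk n \<sigma> w) (fam!j) ws) ([3,4,5,6] ! idx) (bcert!idx)"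
    using list_all2_nthD[OF cb[unfolded check_base_def]] idx by simp
  have J: "j < length fam \<and> list_all2 (\<lambda>\<sigma> w. bchk (idx+3) \<sigma> w) (fam!j) ws"
    using P unfolding jw nthk by simp
  show ?thesis
  proof (rule bexI[of _ "fam!j"])
    show "fam ! j \<in> set fam" using J by simp
    show "\<forall>(dv,de,r)\<in>set (fam!j). basec n (ind dv) (ind de) r"
    proof
      fix x assume "x \<in> set (fam!j)"
      then obtain l where l: "l < length (fam!j)" "x = fam!j!l" by (metis in_set_conv_nth)
      have "(\<lambda>\<sigma> w. bchk (idx+3) \<sigma> w) (fam!j!l) (ws!l)"
        using list_all2_nthD[OF conjunct2[OF J] l(1)] .
      then have bx: "bchk (idx+3) x (ws!l)" using l(2) by simp
      obtain dv de r where fields: "x = (dv,de,r)" by (metis prod.collapse)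
      have "bchk (idx+3) (dv,de,r) (ws!l)" using bx fields by (simp del: bchk.simps)
      then have "basec (idx+3) (ind dv) (ind de) r" by (rule bchk_sound)
      then have "basec (idx + 3 + 4*q) (ind dv) (ind de) r" by (rule basec_lift)
      then have "basec n (ind dv) (ind de) r" using nq by simp
      then show "case x of (dv,de,r) \<Rightarrow> basec n (ind dv) (ind de) r" using fields by simp
    qed
  qed
qed

lemma fam_ne_chk: "list_all (\<lambda>S. S \<noteq> []) fam"
  by code_simp

lemma main_inv:
  "hyperpath es \<Longrightarrow> \<exists>S\<in>set fam. \<forall>(dv,de,r)\<in>set S. realz es (ind dv) (ind de) r"
proof (induction es)
  case Nil
  then show ?case using hp_props(1) by blast
next
  case (Cons e es)
  show ?case
  proof (cases "es = []")
    case True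
    have hp: "hyperpath [e]" using Cons.prems True by simp
    have "card e \<ge> 3" using hp_single[OF hp] by simp
    then obtain S where S: "S \<in> set fam" "\<forall>(dv,de,r)\<in>set S. basec (card e) (ind dv) (ind de) r"
      using base_ok by blast
    have "\<forall>(dv,de,r)\<in>set S. realz [e] (ind dv) (ind de) r"
      using S(2) real_base[OF hp] by auto
    then show ?thesis using S(1) True by auto
  next
    case False
    have hp: "hyperpath (e # es)" using Cons.prems .
    have hpt: "hyperpath es" using hp_tl[OF hp False] .
    obtain S where S: "S \<in> set fam" "\<forall>(dv,de,r)\<in>set S. realz es (ind dv) (ind de) r"
      using Cons.IH[OF hpt] by blast
    have "card e \<ge> 3" using hp_cons(2)[OF hp False] .
    then have k: "2 \<le> card e - 1" by simp
    obtain S'' where S'': "S'' \<in> set fam"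
       "\<forall>(dv,de,r)\<in>set S''. \<exists>(dv',de',y)\<in>set S. ktrans (card e - 1) (ind dv') (ind de') y (ind dv) (ind de) r"
      using step_ok[OF S(1) k] by blast
    have "\<forall>(dv,de,r)\<in>set S''. realz (e # es) (ind dv) (ind de) r"
    proof (intro ballI, clarify)
      fix dv de r assume "(dv,de,r) \<in> set S''"
      then obtain dv' de' y where p: "(dv',de',y) \<in> set S" "ktrans (card e - 1) (ind dv') (ind de') y (ind dv) (ind de) r"
        using S''(2) by blast
      have "realz es (ind dv') (ind de') y" using S(2) p(1) by blast
      then show "realz (e # es) (ind dv) (ind de) r" using real_step[OF hp False] p(2) by blast
    qed
    then show ?thesis using S''(1) by blast
  qed
qed

lemma ind_le1: "ind L a \<le> 1" unfolding ind_def by simp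

theorem theorem8:
  fixes es :: "'v set list"
  assumes "hyperpath es"
  shows "A_cordial es"
proof -
  obtain S where S: "S \<in> set fam" "\<forall>(dv,de,r)\<in>set S. realz es (ind dv) (ind de) r"
    using main_inv[OF assms] by blast
  have "S \<noteq> []" using fam_ne_chk S(1) by (simp add: list_all_iff)
  then obtain dv de r where m: "(dv,de,r) \<in> set S" by (metis list.set_sel(1) prod.collapse)
  have R: "realz es (ind dv) (ind de) r" using S(2) m by blast
  obtain x where x: "x \<in> hd es - \<Union>(set (tl es))" using priv_ne[OF assms] by blast
  obtain c C1 C2 where C1: "\<And>a. vcount es c a + ind dv a = C1" and C2: "\<And>a. ecount es c a + ind de a = C2"
    using R x unfolding realz_def by blast
  have F: "A_friendly es c" unfolding A_friendly_def
  proof (intro allI)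
    fix a b
    show "\<bar>int (vcount es c a) - int (vcount es c b)\<bar> \<le> 1"
      using C1[of a] C1[of b] ind_le1[of dv a] ind_le1[of dv b] by linarith
  qed
  have E: "\<forall>a b. \<bar>int (ecount es c a) - int (ecount es c b)\<bar> \<le> 1"
  proof (intro allI)
    fix a b
    show "\<bar>int (ecount es c a) - int (ecount es c b)\<bar> \<le> 1"
      using C2[of a] C2[of b] ind_le1[of de a] ind_le1[of de b] by linarith
  qed
  show ?thesis unfolding A_cordial_def using F E by blast
qed


end
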